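(* Let $n\ge2$ and let $\mathbf{r}\in\mathbb{R}^n$ have pairwise distinct coordinates; let $r_{(n)}=\max_ir_i$, $r_{(1)}=\min_ir_i$, and let $i^\star,j^\star$ be the indices with $r_{i^\star}=r_{(n)}$, $r_{j^\star}=r_{(1)}$. Then $$\max_{\boldsymbol{\pi}\in\Delta_n}\gamma(\boldsymbol{\pi},\mathbf{r})=\log\Big(\frac{e^{r_{(n)}}-e^{r_{(1)}}}{r_{(n)}-r_{(1)}}\Big)-\frac{e^{r_{(n)}}r_{(1)}-e^{r_{(1)}}r_{(n)}}{e^{r_{(n)}}-e^{r_{(1)}}}-1,$$ and the maximizer $\boldsymbol{\pi}^\star$ is unique and given by $$\pi^\star_{i^\star}=\frac{e^{r_{i^\star}}-e^{r_{j^\star}}-(r_{i^\star}-r_{j^\star})e^{r_{j^\star}}}{(r_{i^\star}-r_{j^\star})(e^{r_{i^\star}}-e^{r_{j^\star}})},\qquad\pi^\star_{j^\star}=1-\pi^\star_{i^\star},\qquad\pi^\star_k=0\ (k\notin\{i^\star,j^\star\}).$$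
   Context: $\Delta_n=\{\mathbf{x}\in[0,1]^n:\sum_ix_i=1\}$; $\supp(\mathbf{x})=\{i:x_i>0\}$. For $\boldsymbol{\pi}\in\Delta_n$ and $\mathbf{r}\in\mathbb{R}^n$, $\gamma(\boldsymbol{\pi},\mathbf{r})=\log\big(\sum_{i\in\supp(\boldsymbol{\pi})}\pi_ie^{r_i}\big)-\sum_{i\in\supp(\boldsymbol{\pi})}\pi_ir_i$. *)

theory Defs
  imports "HOL-Analysis.Analysis"
begin

text \<open>Vectors in R^n are represented as functions nat => real with coordinates
  indexed by 0..n-1; points of the prob_simplex are required to vanish outside {..<n}.\<close>

definition prob_simplex :: "nat \<Rightarrow> (nat \<Rightarrow> real) set" where
  "prob_simplex n = {x. (\<forall>i<n. 0 \<le> x i \<and> x i \<le> 1) \<and> (\<forall>i. n \<le> i \<longrightarrow> x i = 0)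
                   \<and> (\<Sum>i<n. x i) = 1}"

definition pos_supp :: "nat \<Rightarrow> (nat \<Rightarrow> real) \<Rightarrow> nat set" where
  "pos_supp n x = {i. i < n \<and> x i > 0}"

definition gamma :: "nat \<Rightarrow> (nat \<Rightarrow> real) \<Rightarrow> (nat \<Rightarrow> real) \<Rightarrow> real" where
  "gamma n p r = ln (\<Sum>i\<in>pos_supp n p. p i * exp (r i)) - (\<Sum>i\<in>pos_supp n p. p i * r i)"

end

theory Submission imports Defs begin

lemma exp_strict: "y \<noteq> 0 \<Longrightarrow> 1 + y < exp (y::real)"
  using exp_minus_greater[of "-y"] by simp

lemma chord_le:
  fixes a b x :: real
  assumes "a \<le> x" "x \<le> b"
  shows "(b-a)*exp x \<le> (b-x)*exp a + (x-a)*exp b"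
proof -
  have ea: "exp x * (1 + (a-x)) \<le> exp a"
    proof -
    have "exp a = exp x * exp (a-x)" by (simp add: exp_add[symmetric])
    thus ?thesis using exp_ge_add_one_self[of "a-x"] by (simp add: mult_left_mono)
  qed
  have eb: "exp x * (1 + (b-x)) \<le> exp b"
    proof -
    have "exp b = exp x * exp (b-x)" by (simp add: exp_add[symmetric])
    thus ?thesis using exp_ge_add_one_self[of "b-x"] by (simp add: mult_left_mono)
  qed
  have "(b-x)*(exp x * (1 + (a-x))) \<le> (b-x)*exp a" using ea assms by (simp add: mult_left_mono)
  moreover have "(x-a)*(exp x * (1 + (b-x))) \<le> (x-a)*exp b" using eb assms by (simp add: mult_left_mono)
  moreover have "(b-a)*exp x = (b-x)*(exp x * (1 + (a-x))) + (x-a)*(exp x * (1 + (b-x)))"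
    by (simp add: algebra_simps)
  ultimately show ?thesis by linarith
qed

lemma chord_less:
  fixes a b x :: real
  assumes "a < x" "x < b"
  shows "(b-a)*exp x < (b-x)*exp a + (x-a)*exp b"
proof -
  have ea: "exp x * (1 + (a-x)) < exp a"
    proof -
    have "exp a = exp x * exp (a-x)" by (simp add: exp_add[symmetric])
    thus ?thesis using exp_strict[of "a-x"] assms by simp
  qed
  have eb: "exp x * (1 + (b-x)) < exp b"
    proof -
    have "exp b = exp x * exp (b-x)" by (simp add: exp_add[symmetric])
    thus ?thesis using exp_strict[of "b-x"] assms by simp
  qed
  have "(b-x)*(exp x * (1 + (a-x))) < (b-x)*exp a" using ea assms by (simp add: mult_strict_left_mono)
  moreover have "(x-a)*(exp x * (1 + (b-x))) < (x-a)*exp b" using eb assms by (simp add: mult_strict_left_mono)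
  moreover have "(b-a)*exp x = (b-x)*(exp x * (1 + (a-x))) + (x-a)*(exp x * (1 + (b-x)))"
    by (simp add: algebra_simps)
  ultimately show ?thesis by linarith
qed

lemma sum_two:
  assumes "finite A" "i \<in> A" "j \<in> A" "i \<noteq> j" "\<forall>k\<in>A. k \<noteq> i \<longrightarrow> k \<noteq> j \<longrightarrow> f k = 0"
  shows "sum f A = f i + f j"
proof -
  have "sum f A = sum f {i,j}"
    by (rule sum.mono_neutral_right) (use assms in auto)
  thus ?thesis using assms by simp
qed

lemma gamma_simp:
  assumes "p \<in> prob_simplex n"
  shows "gamma n p r = ln (\<Sum>i<n. p i * exp (r i)) - (\<Sum>i<n. p i * r i)"
proof -
  have ps: "pos_supp n p \<subseteq> {..<n}" unfolding pos_supp_def by auto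
  have z: "\<forall>i\<in>{..<n} - pos_supp n p. p i = 0"
    using assms unfolding pos_supp_def prob_simplex_def by force
  have "(\<Sum>i\<in>pos_supp n p. p i * exp (r i)) = (\<Sum>i<n. p i * exp (r i))"
    by (rule sum.mono_neutral_left) (use ps z in auto)
  moreover have "(\<Sum>i\<in>pos_supp n p. p i * r i) = (\<Sum>i<n. p i * r i)"
    by (rule sum.mono_neutral_left) (use ps z in auto)
  ultimately show ?thesis unfolding gamma_def by simp
qed

lemma sum_lin:
  fixes p r :: "nat \<Rightarrow> real"
  assumes "(\<Sum>i<n. p i) = 1"
  shows "(\<Sum>i<n. p i * ((b - r i)*ea + (r i - a)*eb)) = (b - (\<Sum>i<n. p i * r i))*ea + ((\<Sum>i<n. p i * r i) - a)*eb"
proof -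
  have "(\<Sum>i<n. p i * ((b - r i)*ea + (r i - a)*eb)) = (\<Sum>i<n. (b*ea - a*eb) * p i + (eb - ea) * (p i * r i))"
    by (rule sum.cong) (auto simp: algebra_simps)
  also have "\<dots> = (b*ea - a*eb) * (\<Sum>i<n. p i) + (eb - ea) * (\<Sum>i<n. p i * r i)"
    by (simp add: sum.distrib sum_distrib_left)
  finally show ?thesis using assms by (simp add: algebra_simps)
qed

theorem mainTheorem16:
  fixes n :: nat and r :: "nat \<Rightarrow> real" and istar jstar :: nat
  assumes "n \<ge> 2"
    and "\<forall>i<n. \<forall>j<n. i \<noteq> j \<longrightarrow> r i \<noteq> r j"
    and "istar < n" and "r istar = Max (r ` {..<n})"
    and "jstar < n" and "r jstar = Min (r ` {..<n})"
  shows "(SUP p\<in>prob_simplex n. gamma n p r) =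
           ln ((exp (r istar) - exp (r jstar)) / (r istar - r jstar))
           - (exp (r istar) * r jstar - exp (r jstar) * r istar) / (exp (r istar) - exp (r jstar)) - 1
    \<and> {p \<in> prob_simplex n. \<forall>q\<in>prob_simplex n. gamma n q r \<le> gamma n p r} =
       {(\<lambda>k. if k = istar then
                 (exp (r istar) - exp (r jstar) - (r istar - r jstar) * exp (r jstar))
                   / ((r istar - r jstar) * (exp (r istar) - exp (r jstar)))
              else if k = jstar then
                 1 - (exp (r istar) - exp (r jstar) - (r istar - r jstar) * exp (r jstar))
                   / ((r istar - r jstar) * (exp (r istar) - exp (r jstar)))
              else 0)}"
proof -
  define a where "a = r jstar"
  define b where "b = r istar"
  define ea where "ea = exp a"
  define eb where "eb = exp b"
  define d where "d = b - a"
  define D where "D = eb - ea"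
  define s where "s = D / d"
  define t where "t = (D - d * ea) / (d * D)"
  define V where "V = ln s - (eb * a - ea * b) / D - 1"
  define pstar where "pstar = (\<lambda>k::nat. if k = istar then t else if k = jstar then 1 - t else 0)"
  define S where "S = prob_simplex n"
  have fin: "finite (r ` {..<n})" "r ` {..<n} \<noteq> {}" using assms(3) by auto
  have bnd: "a \<le> r i \<and> r i \<le> b" if "i < n" for i
    unfolding a_def b_def assms(4,6) using fin that by auto
  have ij: "istar \<noteq> jstar"
  proof
    assume eq: "istar = jstar"
    have "r 0 \<noteq> r 1" using assms(1,2) by auto
    moreover have "r 0 = a" "r 1 = a" using bnd[of 0] bnd[of 1] assms(1) eq unfolding a_def b_def
      by force+
    ultimately show False by simp
  qed
  have ab: "a < b"
    using bnd[of istar] assms(2,3,5) ij unfolding a_def b_def by force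
  have mid: "a < r i \<and> r i < b" if "i < n" "i \<noteq> istar" "i \<noteq> jstar" for i
    using bnd[OF that(1)] assms(2,3,5) that unfolding a_def b_def by force
  have dpos: "d > 0" using ab d_def by simp
  have eapos: "ea > 0" using ea_def by simp
  have Dpos: "D > 0" using ab unfolding D_def ea_def eb_def by simp
  have spos: "s > 0" using Dpos dpos s_def by simp
  have ebd: "eb = ea * exp d" unfolding eb_def ea_def d_def by (simp add: exp_add[symmetric])
  have ead: "ea = eb * exp (- d)" unfolding eb_def ea_def d_def by (simp add: exp_add[symmetric])
  have D1: "D > d * ea"
  proof -
    have "1 + d < exp d" using exp_strict[of d] dpos by simp
    hence "ea * (1 + d) < ea * exp d" using eapos by simp
    thus ?thesis unfolding D_def ebd by (simp add: algebra_simps)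
  qed
  have D2: "D < d * eb"
  proof -
    have "1 - d < exp (-d)" using exp_minus_greater[of d] dpos by simp
    moreover have "eb > 0" using eb_def by simp
    ultimately have "eb * (1 - d) < eb * exp (-d)" by simp
    thus ?thesis unfolding D_def ead by (simp add: algebra_simps)
  qed
  have t0: "0 < t" unfolding t_def using D1 Dpos dpos by simp
  have t1: "t < 1" unfolding t_def using D2 Dpos dpos by (simp add: field_simps D_def algebra_simps)
  have Veq: "V = ln ((exp (r istar) - exp (r jstar)) / (r istar - r jstar))
           - (exp (r istar) * r jstar - exp (r jstar) * r istar) / (exp (r istar) - exp (r jstar)) - 1"
    unfolding V_def s_def D_def d_def ea_def eb_def a_def b_def ..
  have peq: "pstar = (\<lambda>k. if k = istar then
                 (exp (r istar) - exp (r jstar) - (r istar - r jstar) * exp (r jstar))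
                   / ((r istar - r jstar) * (exp (r istar) - exp (r jstar)))
              else if k = jstar then
                 1 - (exp (r istar) - exp (r jstar) - (r istar - r jstar) * exp (r jstar))
                   / ((r istar - r jstar) * (exp (r istar) - exp (r jstar)))
              else 0)"
    unfolding pstar_def t_def D_def d_def ea_def eb_def a_def b_def ..
  have two: "(\<Sum>k<n. f k) = f istar + f jstar"
    if "\<forall>k. k \<noteq> istar \<longrightarrow> k \<noteq> jstar \<longrightarrow> f k = 0" for f :: "nat \<Rightarrow> real"
    using sum_two[of "{..<n}" istar jstar f] that assms(3,5) ij by auto
  have M4g: "(eb * a - ea * b) / D = a - d * ea / D"
  proof -
    have M3: "eb * a - ea * b = a * D - d * ea" by (simp add: D_def d_def algebra_simps)
    show ?thesis using M3 Dpos by (simp add: field_simps)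
  qed
  have pS: "pstar \<in> S"
    unfolding S_def prob_simplex_def
  proof (intro CollectI conjI allI impI)
    show "(\<Sum>i<n. pstar i) = 1" by (subst two) (auto simp: pstar_def ij ij[symmetric])
  qed (use t0 t1 assms(3,5) in \<open>auto simp: pstar_def\<close>)
  have gstar: "gamma n pstar r = V"
  proof -
    have E0: "(\<Sum>i<n. pstar i * exp (r i)) = t * eb + (1 - t) * ea"
      by (subst two) (auto simp: pstar_def ij ij[symmetric] ea_def eb_def a_def b_def)
    have E1: "t * eb + (1 - t) * ea = ea + t * D" by (simp add: D_def algebra_simps)
    have E2: "t * D = s - ea" unfolding t_def s_def using dpos Dpos by (simp add: field_simps)
    have E: "(\<Sum>i<n. pstar i * exp (r i)) = s" using E0 E1 E2 by simp
    have M0: "(\<Sum>i<n. pstar i * r i) = t * b + (1 - t) * a"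
      by (subst two) (auto simp: pstar_def ij ij[symmetric] a_def b_def)
    have M1: "t * b + (1 - t) * a = a + t * d" by (simp add: d_def algebra_simps)
    have M2: "t * d = 1 - d * ea / D" unfolding t_def using dpos Dpos by (simp add: field_simps)
    have M3: "eb * a - ea * b = a * D - d * ea" by (simp add: D_def d_def algebra_simps)
    have M4: "(eb * a - ea * b) / D = a - d * ea / D" using M3 Dpos by (simp add: field_simps)
    have M: "(\<Sum>i<n. pstar i * r i) = (eb * a - ea * b) / D + 1" using M0 M1 M2 M4 by simp
    show ?thesis using gamma_simp[OF pS[unfolded S_def]] E M V_def by simp
  qed
  have main: "gamma n p r \<le> V \<and> (gamma n p r = V \<longrightarrow> p = pstar)" if pS': "p \<in> S" for p
  proof -
    have p0: "\<forall>i<n. 0 \<le> p i" and pn: "\<forall>i. n \<le> i \<longrightarrow> p i = 0" and p1: "(\<Sum>i<n. p i) = 1"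
      using pS' unfolding S_def prob_simplex_def by auto
    define E where "E = (\<Sum>i<n. p i * exp (r i))"
    define M where "M = (\<Sum>i<n. p i * r i)"
    define L where "L = ea + (M - a) * s"
    have g: "gamma n p r = ln E - M" unfolding E_def M_def using gamma_simp pS' S_def by simp
    define c where "c = (\<lambda>i. (b - r i)*ea + (r i - a)*eb - d * exp (r i))"
    have cnn: "c i \<ge> 0" if "i < n" for i
      using chord_le[of a "r i" b] bnd[OF that] unfolding c_def d_def ea_def eb_def by simp
    have cpos: "c i > 0" if "i < n" "i \<noteq> istar" "i \<noteq> jstar" for i
      using chord_less[of a "r i" b] mid[OF that] unfolding c_def d_def ea_def eb_def by simp
    have lin: "(\<Sum>i<n. p i * ((b - r i)*ea + (r i - a)*eb)) = (b - M)*ea + (M - a)*eb"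
      using sum_lin[OF p1] M_def by simp
    have Ld: "L * d = (b - M)*ea + (M - a)*eb"
    proof -
      have "L * d = ea * d + (M - a) * D" unfolding L_def s_def using dpos by (simp add: field_simps)
      also have "\<dots> = (b - M)*ea + (M - a)*eb" by (simp add: D_def d_def algebra_simps)
      finally show ?thesis .
    qed
    have cs: "(\<Sum>i<n. p i * c i) = L * d - d * E"
    proof -
      have "(\<Sum>i<n. p i * c i) = (\<Sum>i<n. p i * ((b - r i)*ea + (r i - a)*eb) - d * (p i * exp (r i)))"
        by (rule sum.cong) (auto simp: c_def algebra_simps)
      also have "\<dots> = L * d - d * E" by (simp add: sum_subtractf lin Ld E_def sum_distrib_left)
      finally show ?thesis .
    qed
    have csnn: "(\<Sum>i<n. p i * c i) \<ge> 0" by (rule sum_nonneg) (use p0 cnn in auto)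
    have EL: "E \<le> L" using cs csnn dpos by (smt (verit) mult.commute mult_le_cancel_left_pos)
    have Epos: "E \<ge> ea"
    proof -
      have "(\<Sum>i<n. p i * ea) \<le> E" unfolding E_def
        by (rule sum_mono) (use p0 bnd in \<open>auto intro!: mult_left_mono simp: ea_def\<close>)
      thus ?thesis using p1 by (simp add: sum_distrib_right[symmetric])
    qed
    have E0: "E > 0" using Epos eapos by simp
    have L0: "L > 0" using EL E0 by simp
    have lnEL: "ln E \<le> ln L" using EL E0 by simp
    have Ls: "L / s - 1 = M - ((eb * a - ea * b) / D + 1)"
    proof -
      have "L / s = d * ea / D + (M - a)" unfolding L_def s_def using dpos Dpos by (simp add: field_simps)
      thus ?thesis using M4g by simp
    qed
    have lnLs: "ln L - ln s = ln (L / s)" using L0 spos by (simp add: ln_div)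
    have lnle: "ln (L / s) \<le> L / s - 1" using ln_le_minus_one L0 spos by simp
    have le: "gamma n p r \<le> V" using g lnEL lnLs lnle Ls V_def by linarith
    moreover have "p = pstar" if eqV: "gamma n p r = V"
    proof -
      have e1: "ln E = ln L" and e2: "ln (L / s) = L / s - 1"
        using g lnEL lnLs lnle Ls V_def eqV by linarith+
      have "L / s = 1" using ln_eq_minus_one[OF _ e2] L0 spos by simp
      hence Lsv: "L = s" using spos by simp
      hence Mv: "M = (eb * a - ea * b) / D + 1" using Ls spos by simp
      have "E = L" using e1 E0 L0 by simp
      hence "(\<Sum>i<n. p i * c i) = 0" using cs by simp
      hence pc: "\<forall>i\<in>{..<n}. p i * c i = 0"
      proof -
        have nn: "\<forall>i\<in>{..<n}. 0 \<le> p i * c i" using p0 cnn by simp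
        show ?thesis using sum_nonneg_eq_0_iff[of "{..<n}" "\<lambda>i. p i * c i"] nn \<open>(\<Sum>i<n. p i * c i) = 0\<close> by simp
      qed
      have pz: "p k = 0" if "k \<noteq> istar" "k \<noteq> jstar" for k
      proof (cases "k < n")
        case True thus ?thesis using pc cpos[OF True that] by force
      next
        case False thus ?thesis using pn by simp
      qed
      have s1: "p istar + p jstar = 1" using p1 two[of p] pz by simp
      have sM: "M = p istar * b + p jstar * a" using two[of "\<lambda>i. p i * r i"] pz M_def a_def b_def by simp
      have pi: "p istar = t"
      proof -
        have pj: "p jstar = 1 - p istar" using s1 by simp
        have "M = a + d * p istar" using sM pj by (simp add: d_def algebra_simps)
        hence h1: "d * p istar = 1 - d * ea / D" using Mv M4g by simp
        have h2: "d * t = 1 - d * ea / D" unfolding t_def using dpos Dpos by (simp add: field_simps)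
        from h1 h2 have "d * p istar = d * t" by simp
        thus ?thesis using dpos by simp
      qed
      show ?thesis
      proof
        fix k show "p k = pstar k"
          using pz pi s1 unfolding pstar_def by auto
      qed
    qed
    ultimately show ?thesis by blast
  qed
  have sup: "(SUP p\<in>S. gamma n p r) = V"
  proof (rule cSup_eq_maximum)
    show "V \<in> (\<lambda>p. gamma n p r) ` S" using pS gstar by (metis image_eqI)
    fix x assume "x \<in> (\<lambda>p. gamma n p r) ` S"
    then obtain p where "p \<in> S" "x = gamma n p r" by blast
    thus "x \<le> V" using main by blast
  qed
  have maxset: "{p \<in> S. \<forall>q\<in>S. gamma n q r \<le> gamma n p r} = {pstar}"
  proof
    show "{p \<in> S. \<forall>q\<in>S. gamma n q r \<le> gamma n p r} \<subseteq> {pstar}"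
    proof
      fix p assume "p \<in> {p \<in> S. \<forall>q\<in>S. gamma n q r \<le> gamma n p r}"
      hence h: "p \<in> S" "gamma n pstar r \<le> gamma n p r" using pS by auto
      have "gamma n p r \<le> V" "gamma n p r = V \<longrightarrow> p = pstar" using main[OF h(1)] by auto
      hence "p = pstar" using h(2) gstar by linarith
      thus "p \<in> {pstar}" by simp
    qed
    show "{pstar} \<subseteq> {p \<in> S. \<forall>q\<in>S. gamma n q r \<le> gamma n p r}"
    proof -
      have "\<forall>q\<in>S. gamma n q r \<le> gamma n pstar r" using main gstar by simp
      thus ?thesis using pS by simp
    qed
  qed
  have "(SUP p\<in>prob_simplex n. gamma n p r) = V" using sup S_def by simp
  moreover have "{p \<in> prob_simplex n. \<forall>q\<in>prob_simplex n. gamma n q r \<le> gamma n p r} = {pstar}"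
    using maxset S_def by simp
  ultimately show ?thesis unfolding Veq peq by blast
qed

end
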